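(* Fix $n\ge1$. For $\theta>0$ let $K_n(\theta)$ be a random variable with $P\{K_n(\theta)=k\}=|S_n^k|\theta^k/\theta_{(n)}$ for $k=1,\dots,n$, where $\theta_{(n)}=\theta(\theta+1)\cdots(\theta+n-1)$ and $|S_n^k|$ is the coefficient of $\theta^k$ in $\theta_{(n)}$. Then, as $\theta\to\infty$, the family of laws of $K_n(\theta)$ satisfies an LDP on $\{1,\dots,n\}$ with speed $\log\theta$ and rate function $I(k)=n-k$.
   Context: $K_n(\theta)$ is the number of distinct alleles in a sample of size $n$ from a $PD(\theta)$ population. An LDP with speed $\log\theta$ uses normalization $(\log\theta)^{-1}\log$. *)

theory Defs
  imports "HOL-Analysis.Analysis" "HOL-Computational_Algebra.Polynomial"
begin

definition rising_poly :: "nat \<Rightarrow> real poly" where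
  "rising_poly n = (\<Prod>i<n. [:real i, 1:])"

definition absS :: "nat \<Rightarrow> nat \<Rightarrow> real" where
  "absS n k = coeff (rising_poly n) k"

definition rising :: "real \<Rightarrow> nat \<Rightarrow> real" where
  "rising \<theta> n = (\<Prod>i<n. \<theta> + real i)"

text \<open>Law of K_n(theta): P{K_n(theta) \<in> A} for A a set of naturals.\<close>
definition K_law :: "nat \<Rightarrow> real \<Rightarrow> nat set \<Rightarrow> real" where
  "K_law n \<theta> A = (\<Sum>k\<in>A \<inter> {1..n}. absS n k * \<theta> ^ k / rising \<theta> n)"

definition elog :: "real \<Rightarrow> ereal" where
  "elog p = (if p = 0 then - \<infinity> else ereal (ln p))"

definition LDP :: "'a topology \<Rightarrow> (real \<Rightarrow> 'a set \<Rightarrow> real) \<Rightarrow> (real \<Rightarrow> real) \<Rightarrow> ('a \<Rightarrow> ereal) \<Rightarrow> bool" where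
  "LDP X P s I \<longleftrightarrow>
     (\<forall>x\<in>topspace X. 0 \<le> I x) \<and>
     (\<forall>c. closedin X {x\<in>topspace X. I x \<le> c}) \<and>
     (\<forall>\<Gamma>. \<Gamma> \<subseteq> topspace X \<longrightarrow>
        - (INF x\<in>X interior_of \<Gamma>. I x) \<le> Liminf at_top (\<lambda>t. elog (P t \<Gamma>) / ereal (s t)) \<and>
        Limsup at_top (\<lambda>t. elog (P t \<Gamma>) / ereal (s t)) \<le> - (INF x\<in>X closure_of \<Gamma>. I x))"

end

theory Submission
  imports Defs
begin

lemma rp_Suc: "rising_poly (Suc n) = [:real n, 1:] * rising_poly n"
  by (simp add: rising_poly_def mult.commute)

lemma coeff_rp_Suc0: "coeff (rising_poly (Suc n)) 0 = real n * coeff (rising_poly n) 0"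
  by (simp add: rp_Suc)

lemma coeff_rp_SucSuc: "coeff (rising_poly (Suc n)) (Suc k) = real n * coeff (rising_poly n) (Suc k) + coeff (rising_poly n) k"
  by (simp add: rp_Suc)

lemma absS_nonneg: "0 \<le> absS n k"
  unfolding absS_def
proof (induction n arbitrary: k)
  case 0 then show ?case by (simp add: rising_poly_def)
next
  case (Suc n) then show ?case
    by (cases k) (simp_all add: coeff_rp_Suc0 coeff_rp_SucSuc)
qed

lemma absS_pos: "1 \<le> k \<Longrightarrow> k \<le> n \<Longrightarrow> 0 < absS n k"
  unfolding absS_def
proof (induction n arbitrary: k)
  case 0 then show ?case by simp
next
  case (Suc n)
  show ?case
  proof (cases n)
    case 0
    with Suc.prems have "k = 1" by simp
    then show ?thesis using 0 by (simp add: rising_poly_def)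
  next
    case (Suc n')
    obtain j where k: "k = Suc j" using Suc.prems by (cases k) auto
    have nn: "0 \<le> coeff (rising_poly n) k" using absS_nonneg unfolding absS_def by blast
    show ?thesis
    proof (cases j)
      case 0
      have "0 < coeff (rising_poly n) 1" using Suc.IH[of 1] Suc.prems \<open>n = Suc n'\<close> by simp
      then have "0 < real n * coeff (rising_poly n) 1" using \<open>n = Suc n'\<close> by simp
      moreover have "0 \<le> coeff (rising_poly n) 0" using absS_nonneg unfolding absS_def by blast
      ultimately show ?thesis using k 0 by (simp add: coeff_rp_SucSuc)
    next
      case (Suc j')
      have "0 < coeff (rising_poly n) j" using Suc.IH[of j] Suc.prems k Suc by simp
      moreover have "0 \<le> real n * coeff (rising_poly n) k" using nn by simp
      ultimately show ?thesis using k by (simp add: coeff_rp_SucSuc)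
    qed
  qed
qed

lemma rising_lower: "0 < t \<Longrightarrow> t ^ n \<le> rising t n"
  unfolding rising_def
  using prod_mono[of "{..<n}" "\<lambda>_. t" "\<lambda>i. t + real i"] by simp

lemma rising_upper: "0 < t \<Longrightarrow> real n \<le> t \<Longrightarrow> rising t n \<le> (2*t) ^ n"
  unfolding rising_def
  using prod_mono[of "{..<n}" "\<lambda>i. t + real i" "\<lambda>_. 2*t"] by simp

lemma rising_pos: "0 < t \<Longrightarrow> 0 < rising t n"
  unfolding rising_def by (simp add: prod_pos add_pos_nonneg)

lemma key_limit:
  assumes G: "\<Gamma> \<subseteq> {1..n}" "\<Gamma> \<noteq> {}"
  defines "m \<equiv> Max \<Gamma>"
  shows "((\<lambda>t. ln (K_law n t \<Gamma>) / ln t) \<longlongrightarrow> real m - real n) at_top"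
proof -
  have fin: "finite \<Gamma>" using G finite_subset by blast
  have mG: "m \<in> \<Gamma>" using fin G m_def by simp
  have km: "\<And>k. k \<in> \<Gamma> \<Longrightarrow> k \<le> m" using fin m_def by simp
  have mn: "1 \<le> m" "m \<le> n" using mG G by auto
  define c where "c = absS n m"
  define C where "C = (\<Sum>k\<in>\<Gamma>. absS n k)"
  have cpos: "0 < c" using absS_pos mn c_def by simp
  have cC: "c \<le> C" unfolding C_def c_def
    using member_le_sum[of m \<Gamma> "absS n"] mG fin absS_nonneg by simp
  have Cpos: "0 < C" using cpos cC by simp
  have KL: "K_law n t \<Gamma> = (\<Sum>k\<in>\<Gamma>. absS n k * t ^ k) / rising t n" for t
    unfolding K_law_def using G by (simp add: Int_absorb2 sum_divide_distrib)
  have ev: "eventually (\<lambda>t. t > 1 \<and> t \<ge> real n) at_top"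
    by (intro eventually_conj eventually_gt_at_top eventually_ge_at_top)
  have low: "eventually (\<lambda>t. (ln c - real n * ln 2) / ln t + (real m - real n) \<le> ln (K_law n t \<Gamma>) / ln t) at_top"
    using ev
  proof eventually_elim
    case (elim t)
    have t0: "0 < t" using elim by simp
    have lt: "0 < ln t" using elim by simp
    have s1: "c * t ^ m \<le> (\<Sum>k\<in>\<Gamma>. absS n k * t ^ k)"
      unfolding c_def using member_le_sum[of m \<Gamma> "\<lambda>k. absS n k * t ^ k"] mG fin absS_nonneg t0 by simp
    have rp: "0 < rising t n" using rising_pos t0 by simp
    have "c * t ^ m / (2*t) ^ n \<le> c * t ^ m / rising t n"
      using rising_upper[OF t0] elim rp cpos t0 by (intro divide_left_mono) auto
    also have "\<dots> \<le> K_law n t \<Gamma>" unfolding KL using s1 rp by (simp add: divide_right_mono)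
    finally have le: "c * t ^ m / (2*t) ^ n \<le> K_law n t \<Gamma>" .
    have p: "0 < c * t ^ m / (2*t) ^ n" using cpos t0 by simp
    have "ln (c * t ^ m / (2*t) ^ n) = ln c + real m * ln t - real n * ln 2 - real n * ln t"
      using cpos t0 by (simp add: ln_div ln_mult ln_realpow)
    with ln_le_cancel_iff[of _ "K_law n t \<Gamma>"] le p
    have "ln c + real m * ln t - real n * ln 2 - real n * ln t \<le> ln (K_law n t \<Gamma>)"
      by (metis less_le_trans ln_mono)
    then have h: "ln c - real n * ln 2 + (real m - real n) * ln t \<le> ln (K_law n t \<Gamma>)"
      by (simp add: algebra_simps)
    have "(ln c - real n * ln 2) / ln t + (real m - real n) = (ln c - real n * ln 2 + (real m - real n) * ln t) / ln t"
      using lt by (simp add: field_simps)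
    also have "\<dots> \<le> ln (K_law n t \<Gamma>) / ln t" using h lt by (intro divide_right_mono) auto
    finally show ?case .
  qed
  have up: "eventually (\<lambda>t. ln (K_law n t \<Gamma>) / ln t \<le> ln C / ln t + (real m - real n)) at_top"
    using ev
  proof eventually_elim
    case (elim t)
    have t0: "0 < t" using elim by simp
    have lt: "0 < ln t" using elim by simp
    have s1: "(\<Sum>k\<in>\<Gamma>. absS n k * t ^ k) \<le> (\<Sum>k\<in>\<Gamma>. absS n k * t ^ m)"
      using km elim absS_nonneg by (intro sum_mono mult_left_mono power_increasing) auto
    have s2: "c * t ^ m \<le> (\<Sum>k\<in>\<Gamma>. absS n k * t ^ k)"
      unfolding c_def using member_le_sum[of m \<Gamma> "\<lambda>k. absS n k * t ^ k"] mG fin absS_nonneg t0 by simp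
    have rp: "0 < rising t n" using rising_pos t0 by simp
    have Kp: "0 < K_law n t \<Gamma>" unfolding KL using s2 cpos t0 rp
      by (metis divide_pos_pos less_le_trans mult_pos_pos zero_less_power)
    have "K_law n t \<Gamma> \<le> C * t ^ m / rising t n" unfolding KL C_def
      using s1 rp by (simp add: divide_right_mono sum_distrib_right)
    also have "\<dots> \<le> C * t ^ m / t ^ n"
      using rising_lower[OF t0, of n] Cpos t0 rp by (intro divide_left_mono) auto
    finally have le: "K_law n t \<Gamma> \<le> C * t ^ m / t ^ n" .
    have "ln (C * t ^ m / t ^ n) = ln C + real m * ln t - real n * ln t"
      using Cpos t0 by (simp add: ln_div ln_mult ln_realpow)
    with le Kp have "ln (K_law n t \<Gamma>) \<le> ln C + real m * ln t - real n * ln t"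
      by (metis ln_mono)
    then show ?case using lt by (simp add: field_simps)
  qed
  have lnI: "filterlim (ln :: real \<Rightarrow> real) at_infinity at_top"
    by (rule filterlim_at_top_imp_at_infinity[OF ln_at_top])
  have L1: "((\<lambda>t. (ln c - real n * ln 2) / ln t + (real m - real n)) \<longlongrightarrow> 0 + (real m - real n)) at_top"
    by (intro tendsto_add tendsto_divide_0[OF tendsto_const lnI] tendsto_const)
  have L2: "((\<lambda>t. ln C / ln t + (real m - real n)) \<longlongrightarrow> 0 + (real m - real n)) at_top"
    by (intro tendsto_add tendsto_divide_0[OF tendsto_const lnI] tendsto_const)
  show ?thesis using tendsto_sandwich[OF low up] L1 L2 by simp
qed

theorem theorem4p2:
  fixes n :: nat
  assumes "n \<ge> 1"
  shows "LDP (discrete_topology {1..n}) (K_law n) (\<lambda>\<theta>. ln \<theta>) (\<lambda>k. ereal (real n - real k))"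
  unfolding LDP_def
proof (intro conjI allI impI)
  show "\<forall>x\<in>topspace (discrete_topology {1..n}). 0 \<le> ereal (real n - real x)" by auto
next
  fix c show "closedin (discrete_topology {1..n}) {x \<in> topspace (discrete_topology {1..n}). ereal (real n - real x) \<le> c}"
    by (auto simp: closedin_discrete_topology)
next
  fix \<Gamma> :: "nat set" assume G: "\<Gamma> \<subseteq> topspace (discrete_topology {1..n})"
  then have G': "\<Gamma> \<subseteq> {1..n}" by simp
  have int: "discrete_topology {1..n} interior_of \<Gamma> = \<Gamma>"
    using G' by (simp add: discrete_topology_interior_of Int_absorb1)
  have cl: "discrete_topology {1..n} closure_of \<Gamma> = \<Gamma>"
    using G' by (simp add: discrete_topology_closure_of Int_absorb1)
  have "- (INF x\<in>\<Gamma>. ereal (real n - real x)) \<le> Liminf at_top (\<lambda>t. elog (K_law n t \<Gamma>) / ereal (ln t)) \<and>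
        Limsup at_top (\<lambda>t. elog (K_law n t \<Gamma>) / ereal (ln t)) \<le> - (INF x\<in>\<Gamma>. ereal (real n - real x))"
  proof (cases "\<Gamma> = {}")
    case True
    have "eventually (\<lambda>t. elog (K_law n t \<Gamma>) / ereal (ln t) = -\<infinity>) at_top"
      using eventually_gt_at_top[of 1]
      by eventually_elim (simp add: True K_law_def elog_def divide_ereal_def)
    then have "((\<lambda>t. elog (K_law n t \<Gamma>) / ereal (ln t)) \<longlongrightarrow> -\<infinity>) at_top"
      by (rule tendsto_eventually)
    then have "Limsup at_top (\<lambda>t. elog (K_law n t \<Gamma>) / ereal (ln t)) = -\<infinity>"
      by (intro lim_imp_Limsup) simp_all
    then show ?thesis using True by (simp add: top_ereal_def)
  next
    case False
    have fin: "finite \<Gamma>" using G' finite_subset by blast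
    define m where "m = Max \<Gamma>"
    have mG: "m \<in> \<Gamma>" using fin False m_def by simp
    have km: "\<And>k. k \<in> \<Gamma> \<Longrightarrow> k \<le> m" using fin m_def by simp
    have INF: "(INF x\<in>\<Gamma>. ereal (real n - real x)) = ereal (real n - real m)"
    proof (rule antisym)
      show "(INF x\<in>\<Gamma>. ereal (real n - real x)) \<le> ereal (real n - real m)"
        using mG by (rule INF_lower)
      show "ereal (real n - real m) \<le> (INF x\<in>\<Gamma>. ereal (real n - real x))"
        using km by (intro INF_greatest) auto
    qed
    have lim: "((\<lambda>t. ln (K_law n t \<Gamma>) / ln t) \<longlongrightarrow> real m - real n) at_top"
      using key_limit[OF G' False] m_def by simp
    have Kpos: "eventually (\<lambda>t. 0 < K_law n t \<Gamma>) at_top"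
    proof -
      have "eventually (\<lambda>t::real. 0 < t) at_top" by (rule eventually_gt_at_top)
      then show ?thesis
      proof eventually_elim
        case (elim t)
        have "0 < absS n m * t ^ m / rising t n"
          using absS_pos[of m n] mG G' elim rising_pos[of t n] by auto
        also have "\<dots> \<le> K_law n t \<Gamma>"
          unfolding K_law_def using mG G' fin absS_nonneg elim rising_pos[of t n]
          by (intro member_le_sum) (auto simp: Int_absorb2)
        finally show ?case .
      qed
    qed
    have E: "eventually (\<lambda>t. ereal (ln (K_law n t \<Gamma>) / ln t) = elog (K_law n t \<Gamma>) / ereal (ln t)) at_top"
      using Kpos eventually_gt_at_top[of 1]
      by eventually_elim (simp add: elog_def ereal_divide)
    have T: "((\<lambda>t. ereal (ln (K_law n t \<Gamma>) / ln t)) \<longlongrightarrow> ereal (real m - real n)) at_top"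
      using lim by (rule tendsto_ereal)
    have L: "((\<lambda>t. elog (K_law n t \<Gamma>) / ereal (ln t)) \<longlongrightarrow> ereal (real m - real n)) at_top"
      by (rule Lim_transform_eventually[OF T E])
    have "Liminf at_top (\<lambda>t. elog (K_law n t \<Gamma>) / ereal (ln t)) = ereal (real m - real n)"
      using L by (intro lim_imp_Liminf) simp_all
    moreover have "Limsup at_top (\<lambda>t. elog (K_law n t \<Gamma>) / ereal (ln t)) = ereal (real m - real n)"
      using L by (intro lim_imp_Limsup) simp_all
    ultimately show ?thesis using INF by simp
  qed
  then show "- (INF x\<in>discrete_topology {1..n} interior_of \<Gamma>. ereal (real n - real x)) \<le> Liminf at_top (\<lambda>t. elog (K_law n t \<Gamma>) / ereal (ln t))"
    "Limsup at_top (\<lambda>t. elog (K_law n t \<Gamma>) / ereal (ln t)) \<le> - (INF x\<in>discrete_topology {1..n} closure_of \<Gamma>. ereal (real n - real x))"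
    using int cl by simp_all
qed

end
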